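(* Let $\rho_{i\to j}(e)$ be a subexpression of the clique-width $k$-expression $e_G$ and let $C,N\in[0,\mathcal{N}]^{k\times q}$. Let $N_e$ be defined by $N_e[i,a]=N[j,a]$ for every color $a$ and $N_e[h,a]=N[h,a]$ for every $h\in[1,k]\setminus\{i\}$ and every color $a$. If $C[i,a]=0$ for all $a\in\mathrm{Colors}$, then $\lambda(\rho_{i\to j}(e),C,N)$ equals the minimum of $\lambda(e,C_e,N_e)$ over all $C_e\in[0,\mathcal{N}]^{k\times q}$ such that $C[j,a]=\min(\mathcal{N},C_e[i,a]+C_e[j,a])$ for all colors $a$ and $C_e[h,a]=C[h,a]$ for all $h\in[1,k]\setminus\{i,j\}$ and all colors $a$. Otherwise, $\lambda(\rho_{i\to j}(e),C,N)=\mathrm{Error}$.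
   Context: Weight set: $(\mathrm{Weights},\preceq,\circledast)$ where $\preceq$ is a total order with a maximum element $\mathrm{Error}$, $\min$ is the minimum w.r.t. $\preceq$ (minimum of an empty set is $\mathrm{Error}$), and $\circledast$ is commutative, associative, has a neutral element, has absorbing element $\mathrm{Error}$, and is monotone. A color-counting 1-locally checkable problem is given by a graph $G$, colors $\mathrm{Colors}=\{a_1,\ldots,a_q\}$, nonempty lists $L_v\subseteq\mathrm{Colors}$, weights $w_{v,a}\in\mathrm{Weights}\setminus\{\mathrm{Error}\}$ ($a\in L_v$), and a function $check(v,a,n_1,\ldots,n_q)\in\{\mathrm{True},\mathrm{False}\}$. $\mathcal{N}\in[1,|V(G)|]$ is an integer with $check(v,a,n_1,\ldots,n_q)=check(v,a,\min(\mathcal{N},n_1),\ldots,\min(\mathcal{N},n_q))$ always. $[x,y]=\{x,\ldots,y\}$. $e_G$ is an irredundant clique-width $k$-expression of $G$ (operations $i(v)$, $\oplus$, $\eta_{i,j}$, $\rho_{i\to j}$ renaming label $i$ to $j$; irredundant means no join adds an already existing edge), in which every relabeling $\rho_{i\to j}(e)$ has some vertex of $G_e$ of label $j$. For a subexpression $e$, $G_e$ is its labeled graph and $\ell_e(v)$ the label of $v$ in $G_e$. For $C,N\in[0,\mathcal{N}]^{k\times q}$ (rows = labels, columns = colors), a coloring $c$ of $G_e$ with $c(v)\in L_v$ for all $v$ is a $(C,N)$-coloring of $G_e$ if (C1) $\min(\mathcal{N},|\{v\in V(G_e): c(v)=a,\ \ell_e(v)=i\}|)=C[i,a]$ for all $i,a$;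 and (C2) for all $v\in V(G_e)$, $check(v,c(v),n_1,\ldots,n_q)$ holds with $n_j=\min(\mathcal{N},N[\ell_e(v),a_j]+|\{u\in N_{G_e}(v):c(u)=a_j\}|)$. $\lambda(e,C,N)$ is the minimum of $\circledast_{v\in V(G_e)}w_{v,c(v)}$ over all $(C,N)$-colorings $c$ of $G_e$ ($\mathrm{Error}$ if none). *)

theory Defs
  imports Main
begin

definition weight_structure :: "'w::{linorder,comm_monoid_mult} \<Rightarrow> bool" where
  "weight_structure Err \<longleftrightarrow>
     (\<forall>x. x \<le> Err) \<and> (\<forall>x. x * Err = Err) \<and>
     (\<forall>x y z::'w. x \<le> y \<longrightarrow> x * z \<le> y * z)"

definition wmin :: "'w::linorder \<Rightarrow> 'w set \<Rightarrow> 'w" where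
  "wmin Err S = (if S = {} then Err else Min S)"

datatype 'v cw =
    Vertex nat 'v
  | Union "'v cw" "'v cw"
  | Join nat nat "'v cw"
  | Relabel nat nat "'v cw"

fun verts :: "'v cw \<Rightarrow> 'v set" where
  "verts (Vertex i v) = {v}"
| "verts (Union e1 e2) = verts e1 \<union> verts e2"
| "verts (Join i j e) = verts e"
| "verts (Relabel i j e) = verts e"

fun lab :: "'v cw \<Rightarrow> 'v \<Rightarrow> nat" where
  "lab (Vertex i v) u = i"
| "lab (Union e1 e2) u = (if u \<in> verts e1 then lab e1 u else lab e2 u)"
| "lab (Join i j e) u = lab e u"
| "lab (Relabel i j e) u = (if lab e u = i then j else lab e u)"

fun adj :: "'v cw \<Rightarrow> 'v \<Rightarrow> 'v \<Rightarrow> bool" where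
  "adj (Vertex i v) x y = False"
| "adj (Union e1 e2) x y = (adj e1 x y \<or> adj e2 x y)"
| "adj (Join i j e) x y = (adj e x y \<or>
     (x \<in> verts e \<and> y \<in> verts e \<and>
      ((lab e x = i \<and> lab e y = j) \<or> (lab e x = j \<and> lab e y = i))))"
| "adj (Relabel i j e) x y = adj e x y"

fun subexprs :: "'v cw \<Rightarrow> 'v cw set" where
  "subexprs (Vertex i v) = {Vertex i v}"
| "subexprs (Union e1 e2) = insert (Union e1 e2) (subexprs e1 \<union> subexprs e2)"
| "subexprs (Join i j e) = insert (Join i j e) (subexprs e)"
| "subexprs (Relabel i j e) = insert (Relabel i j e) (subexprs e)"

text \<open>Well-formed irredundant clique-width k-expression in which every
  relabeling rho_{i->j}(e) has a vertex of label j in G_e.\<close>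
fun wf_expr :: "nat \<Rightarrow> 'v cw \<Rightarrow> bool" where
  "wf_expr k (Vertex i v) = (i \<in> {1..k})"
| "wf_expr k (Union e1 e2) = (wf_expr k e1 \<and> wf_expr k e2 \<and> verts e1 \<inter> verts e2 = {})"
| "wf_expr k (Join i j e) = (wf_expr k e \<and> i \<in> {1..k} \<and> j \<in> {1..k} \<and> i \<noteq> j \<and>
     (\<forall>x\<in>verts e. \<forall>y\<in>verts e. lab e x = i \<and> lab e y = j \<longrightarrow> \<not> adj e x y))"
| "wf_expr k (Relabel i j e) = (wf_expr k e \<and> i \<in> {1..k} \<and> j \<in> {1..k} \<and> i \<noteq> j \<and>
     (\<exists>v\<in>verts e. lab e v = j))"

text \<open>Matrices in [0,NN]^{k x q}: rows = labels 1..k, columns = colors;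
  entries outside this index range are fixed to 0 (extensional representation).\<close>
definition mats :: "nat \<Rightarrow> 'c set \<Rightarrow> nat \<Rightarrow> (nat \<Rightarrow> 'c \<Rightarrow> nat) set" where
  "mats k Colors NN = {M. \<forall>i a. (i \<in> {1..k} \<and> a \<in> Colors \<longrightarrow> M i a \<le> NN) \<and>
                               (\<not> (i \<in> {1..k} \<and> a \<in> Colors) \<longrightarrow> M i a = 0)}"

definition cn_coloring ::
  "nat \<Rightarrow> 'c set \<Rightarrow> ('v \<Rightarrow> 'c set) \<Rightarrow> ('v \<Rightarrow> 'c \<Rightarrow> ('c \<Rightarrow> nat) \<Rightarrow> bool) \<Rightarrow> nat
   \<Rightarrow> 'v cw \<Rightarrow> (nat \<Rightarrow> 'c \<Rightarrow> nat) \<Rightarrow> (nat \<Rightarrow> 'c \<Rightarrow> nat) \<Rightarrow> ('v \<Rightarrow> 'c) \<Rightarrow> bool" where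
  "cn_coloring k Colors L check NN e C N c \<longleftrightarrow>
     (\<forall>v\<in>verts e. c v \<in> L v) \<and>
     (\<forall>i\<in>{1..k}. \<forall>a\<in>Colors.
        min NN (card {v \<in> verts e. c v = a \<and> lab e v = i}) = C i a) \<and>
     (\<forall>v\<in>verts e. check v (c v)
        (\<lambda>b. min NN (N (lab e v) b + card {u \<in> verts e. adj e v u \<and> c u = b})))"

definition lam ::
  "'w::{linorder,comm_monoid_mult} \<Rightarrow> nat \<Rightarrow> 'c set \<Rightarrow> ('v \<Rightarrow> 'c set) \<Rightarrow> ('v \<Rightarrow> 'c \<Rightarrow> 'w)
   \<Rightarrow> ('v \<Rightarrow> 'c \<Rightarrow> ('c \<Rightarrow> nat) \<Rightarrow> bool) \<Rightarrow> nat
   \<Rightarrow> 'v cw \<Rightarrow> (nat \<Rightarrow> 'c \<Rightarrow> nat) \<Rightarrow> (nat \<Rightarrow> 'c \<Rightarrow> nat) \<Rightarrow> 'w" where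
  "lam Err k Colors L w check NN e C N =
     wmin Err {\<Prod>v\<in>verts e. w v (c v) | c. cn_coloring k Colors L check NN e C N c}"

end

theory Submission
  imports Defs "HOL-Library.FuncSet"
begin

lemma verts_finite: "finite (verts e)"
  by (induction e) auto

lemma sub_wf: "e' \<in> subexprs e \<Longrightarrow> wf_expr k e \<Longrightarrow> wf_expr k e' \<and> verts e' \<subseteq> verts e"
  by (induction e) auto

lemma wmin_union:
  fixes Err :: "'w::linorder"
  assumes top: "\<forall>x. x \<le> Err" and T: "finite T" and ST: "\<forall>x\<in>P. S x \<subseteq> T"
  shows "wmin Err {wmin Err (S x) | x. x \<in> P} = wmin Err (\<Union>x\<in>P. S x)"
proof (cases "(\<Union>x\<in>P. S x) = {}")
  case True
  then have "{wmin Err (S x) | x. x \<in> P} \<subseteq> {Err}" by (auto simp: wmin_def)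
  then have "{wmin Err (S x) | x. x \<in> P} = {} \<or> {wmin Err (S x) | x. x \<in> P} = {Err}"
    by (rule subset_singletonD)
  moreover have "wmin Err (\<Union>x\<in>P. S x) = Err" using True by (simp add: wmin_def)
  moreover have "wmin Err {} = Err" "wmin Err {Err} = Err" by (simp_all add: wmin_def)
  ultimately show ?thesis by (elim disjE) simp_all
next
  case False
  have fU: "finite (\<Union>x\<in>P. S x)" using T ST by (meson UN_least finite_subset)
  define m where "m = Min (\<Union>x\<in>P. S x)"
  have mU: "m \<in> (\<Union>x\<in>P. S x)" unfolding m_def using fU False by (rule Min_in)
  then obtain x0 where x0: "x0 \<in> P" "m \<in> S x0" by blast
  have fS: "\<And>x. x \<in> P \<Longrightarrow> finite (S x)" using T ST finite_subset by blast
  have le: "\<And>x y. x \<in> P \<Longrightarrow> y \<in> S x \<Longrightarrow> m \<le> y"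
    unfolding m_def using fU by (intro Min_le) blast+
  have "wmin Err (S x0) = m"
  proof -
    have "S x0 \<noteq> {}" using x0 by blast
    moreover have "Min (S x0) = m" using x0 fS[OF x0(1)] le[OF x0(1)] by (intro Min_eqI) auto
    ultimately show ?thesis by (simp add: wmin_def)
  qed
  then have mem: "m \<in> {wmin Err (S x) | x. x \<in> P}" using x0 by blast
  have bound: "\<And>y. y \<in> {wmin Err (S x) | x. x \<in> P} \<Longrightarrow> m \<le> y"
  proof -
    fix y assume "y \<in> {wmin Err (S x) | x. x \<in> P}"
    then obtain x where x: "x \<in> P" "y = wmin Err (S x)" by blast
    show "m \<le> y"
    proof (cases "S x = {}")
      case True then show ?thesis using x top by (simp add: wmin_def)
    next
      case False
      then have "Min (S x) \<in> S x" using fS[OF x(1)] by simp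
      then show ?thesis using x False le by (simp add: wmin_def)
    qed
  qed
  have fO: "finite {wmin Err (S x) | x. x \<in> P}"
  proof -
    have "{wmin Err (S x) | x. x \<in> P} \<subseteq> insert Err T"
    proof
      fix y assume "y \<in> {wmin Err (S x) | x. x \<in> P}"
      then obtain x where x: "x \<in> P" "y = wmin Err (S x)" by blast
      show "y \<in> insert Err T"
      proof (cases "S x = {}")
        case True then show ?thesis using x by (simp add: wmin_def)
      next
        case False
        then have "Min (S x) \<in> S x" using fS[OF x(1)] by simp
        then show ?thesis using x False ST by (auto simp: wmin_def)
      qed
    qed
    then show ?thesis using T finite_subset by blast
  qed
  have "Min {wmin Err (S x) | x. x \<in> P} = m"
    using mem bound fO by (intro Min_eqI) auto
  then show ?thesis using mem False by (auto simp: wmin_def m_def)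
qed

lemma min_min_add: "min (NN::nat) (min NN x + min NN y) = min NN (x + y)"
  by auto

theorem lemma5:
  fixes Err :: "'w::{linorder,comm_monoid_mult}"
    and k NN i j :: nat
    and Colors :: "'c set"
    and L :: "'v \<Rightarrow> 'c set"
    and w :: "'v \<Rightarrow> 'c \<Rightarrow> 'w"
    and check :: "'v \<Rightarrow> 'c \<Rightarrow> ('c \<Rightarrow> nat) \<Rightarrow> bool"
    and eG e :: "'v cw"
    and C N :: "nat \<Rightarrow> 'c \<Rightarrow> nat"
  assumes weights: "weight_structure Err"
    and colors: "finite Colors"
    and lists: "\<forall>v\<in>verts eG. L v \<noteq> {} \<and> L v \<subseteq> Colors"
    and wts: "\<forall>v\<in>verts eG. \<forall>a\<in>L v. w v a \<noteq> Err"
    and NN: "1 \<le> NN" "NN \<le> card (verts eG)"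
    and check_sat: "\<forall>v a n. check v a n = check v a (\<lambda>b. min NN (n b))"
    and wf: "wf_expr k eG"
    and sub: "Relabel i j e \<in> subexprs eG"
    and CN: "C \<in> mats k Colors NN" "N \<in> mats k Colors NN"
  shows "lam Err k Colors L w check NN (Relabel i j e) C N =
    (if (\<forall>a\<in>Colors. C i a = 0) then
       wmin Err {lam Err k Colors L w check NN e Ce (\<lambda>h a. if h = i then N j a else N h a) | Ce.
                   Ce \<in> mats k Colors NN \<and>
                   (\<forall>a\<in>Colors. C j a = min NN (Ce i a + Ce j a)) \<and>
                   (\<forall>h\<in>{1..k} - {i, j}. \<forall>a\<in>Colors. Ce h a = C h a)}
     else Err)"
proof -
  have wfr: "wf_expr k (Relabel i j e)" and vsub: "verts e \<subseteq> verts eG"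
    using sub_wf[OF sub wf] by auto
  then have ij: "i \<in> {1..k}" "j \<in> {1..k}" "i \<noteq> j" by auto
  have fe: "finite (verts e)" by (rule verts_finite)
  have noi: "\<And>c a. {v \<in> verts e. c v = a \<and> lab (Relabel i j e) v = i} = {}"
    using ij by auto
  show ?thesis
  proof (cases "\<forall>a\<in>Colors. C i a = 0")
    case False
    then obtain a where a: "a \<in> Colors" "C i a \<noteq> 0" by blast
    have "\<not> cn_coloring k Colors L check NN (Relabel i j e) C N c" for c
    proof
      assume "cn_coloring k Colors L check NN (Relabel i j e) C N c"
      then have "min NN (card {v \<in> verts (Relabel i j e). c v = a \<and> lab (Relabel i j e) v = i}) = C i a"
        using a ij unfolding cn_coloring_def by blast
      then have "min NN (card ({}::'v set)) = C i a" by (simp only: verts.simps noi)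
      then show False using a by simp
    qed
    then have "lam Err k Colors L w check NN (Relabel i j e) C N = Err"
      unfolding lam_def wmin_def by simp
    then show ?thesis using False by (simp only: if_False)
  next
    case True
    define N' where "N' = (\<lambda>h a. if h = i then N j a else N h a)"
    define P where "P = {Ce. Ce \<in> mats k Colors NN \<and>
                   (\<forall>a\<in>Colors. C j a = min NN (Ce i a + Ce j a)) \<and>
                   (\<forall>h\<in>{1..k} - {i, j}. \<forall>a\<in>Colors. Ce h a = C h a)}"
    define S where "S = (\<lambda>Ce. {\<Prod>v\<in>verts e. w v (c v) | c. cn_coloring k Colors L check NN e Ce N' c})"
    define T where "T = (\<lambda>c. \<Prod>v\<in>verts e. w v (c v)) ` (PiE (verts e) (\<lambda>_. Colors))"
    have fT: "finite T" unfolding T_def using fe colors by (simp add: finite_PiE)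
    have ST: "\<forall>Ce\<in>P. S Ce \<subseteq> T"
    proof (intro ballI subsetI)
      fix Ce y assume "y \<in> S Ce"
      then obtain c where c: "y = (\<Prod>v\<in>verts e. w v (c v))" "cn_coloring k Colors L check NN e Ce N' c"
        unfolding S_def by blast
      have "restrict c (verts e) \<in> PiE (verts e) (\<lambda>_. Colors)"
        using c(2) lists vsub unfolding cn_coloring_def by auto
      moreover have "y = (\<Prod>v\<in>verts e. w v (restrict c (verts e) v))" using c(1) by simp
      ultimately show "y \<in> T" unfolding T_def by blast
    qed
    have adjr: "adj (Relabel i j e) = adj e" by (rule ext)+ simp
    have key: "cn_coloring k Colors L check NN (Relabel i j e) C N c \<longleftrightarrow>
               (\<exists>Ce\<in>P. cn_coloring k Colors L check NN e Ce N' c)" for c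
    proof
      assume col: "cn_coloring k Colors L check NN (Relabel i j e) C N c"
      define Ce where "Ce = (\<lambda>h a. if h \<in> {1..k} \<and> a \<in> Colors then
           min NN (card {v \<in> verts e. c v = a \<and> lab e v = h}) else 0)"
      have split: "{v \<in> verts e. c v = a \<and> lab (Relabel i j e) v = j} =
          {v \<in> verts e. c v = a \<and> lab e v = i} \<union> {v \<in> verts e. c v = a \<and> lab e v = j}" for a
        by auto
      have cardsplit: "card {v \<in> verts e. c v = a \<and> lab (Relabel i j e) v = j} =
          card {v \<in> verts e. c v = a \<and> lab e v = i} + card {v \<in> verts e. c v = a \<and> lab e v = j}" for a
        unfolding split using fe ij by (intro card_Un_disjoint) auto
      have "Ce \<in> P"
      proof -
        have "Ce \<in> mats k Colors NN" unfolding mats_def Ce_def by auto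
        moreover have "\<forall>a\<in>Colors. C j a = min NN (Ce i a + Ce j a)"
        proof
          fix a assume a: "a \<in> Colors"
          have "min NN (card {v \<in> verts (Relabel i j e). c v = a \<and> lab (Relabel i j e) v = j}) = C j a"
            using col ij a unfolding cn_coloring_def by blast
          then have "C j a = min NN (card {v \<in> verts e. c v = a \<and> lab e v = i} + card {v \<in> verts e. c v = a \<and> lab e v = j})"
            using cardsplit[of a] by simp
          then show "C j a = min NN (Ce i a + Ce j a)" unfolding Ce_def using a ij min_min_add by simp
        qed
        moreover have "\<forall>h\<in>{1..k} - {i, j}. \<forall>a\<in>Colors. Ce h a = C h a"
        proof (intro ballI)
          fix h a assume h: "h \<in> {1..k} - {i, j}" and a: "a \<in> Colors"
          have "{v \<in> verts e. c v = a \<and> lab (Relabel i j e) v = h} = {v \<in> verts e. c v = a \<and> lab e v = h}"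
            using h by auto
          moreover have "min NN (card {v \<in> verts (Relabel i j e). c v = a \<and> lab (Relabel i j e) v = h}) = C h a"
            using col h a unfolding cn_coloring_def by blast
          ultimately show "Ce h a = C h a" using h a unfolding Ce_def by simp
        qed
        ultimately show ?thesis unfolding P_def by blast
      qed
      moreover have "cn_coloring k Colors L check NN e Ce N' c"
      proof -
        have "\<forall>v\<in>verts e. N (lab (Relabel i j e) v) = N' (lab e v)"
          unfolding N'_def by (auto intro!: ext)
        then show ?thesis using col adjr unfolding cn_coloring_def Ce_def by auto
      qed
      ultimately show "\<exists>Ce\<in>P. cn_coloring k Colors L check NN e Ce N' c" by blast
    next
      assume "\<exists>Ce\<in>P. cn_coloring k Colors L check NN e Ce N' c"
      then obtain Ce where P: "Ce \<in> P" and col: "cn_coloring k Colors L check NN e Ce N' c" by blast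
      have split: "{v \<in> verts e. c v = a \<and> lab (Relabel i j e) v = j} =
          {v \<in> verts e. c v = a \<and> lab e v = i} \<union> {v \<in> verts e. c v = a \<and> lab e v = j}" for a
        by auto
      have cardsplit: "card {v \<in> verts e. c v = a \<and> lab (Relabel i j e) v = j} =
          card {v \<in> verts e. c v = a \<and> lab e v = i} + card {v \<in> verts e. c v = a \<and> lab e v = j}" for a
        unfolding split using fe ij by (intro card_Un_disjoint) auto
      have c1: "\<forall>v\<in>verts e. c v \<in> L v" using col unfolding cn_coloring_def by auto
      have c2: "\<forall>h\<in>{1..k}. \<forall>a\<in>Colors.
          min NN (card {v \<in> verts e. c v = a \<and> lab (Relabel i j e) v = h}) = C h a"
      proof (intro ballI)
        fix h a assume h: "h \<in> {1..k}" and a: "a \<in> Colors"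
        show "min NN (card {v \<in> verts e. c v = a \<and> lab (Relabel i j e) v = h}) = C h a"
        proof (cases "h = i")
          case True
          have "min NN (card {v \<in> verts (Relabel i j e). c v = a \<and> lab (Relabel i j e) v = h}) = min NN (card ({}::'v set))"
            unfolding True by (simp only: verts.simps noi)
          then show ?thesis using True \<open>\<forall>a\<in>Colors. C i a = 0\<close> a by simp
        next
          case hi: False
          show ?thesis
          proof (cases "h = j")
            case True
            have "C j a = min NN (Ce i a + Ce j a)" using P a unfolding P_def by blast
            moreover have "min NN (card {v \<in> verts e. c v = a \<and> lab e v = i}) = Ce i a"
              using col ij a unfolding cn_coloring_def by blast
            moreover have "min NN (card {v \<in> verts e. c v = a \<and> lab e v = j}) = Ce j a"
              using col ij a unfolding cn_coloring_def by blast
            ultimately have "C j a = min NN (min NN (card {v \<in> verts e. c v = a \<and> lab e v = i}) + min NN (card {v \<in> verts e. c v = a \<and> lab e v = j}))"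
              by simp
            then have "C j a = min NN (card {v \<in> verts e. c v = a \<and> lab e v = i} + card {v \<in> verts e. c v = a \<and> lab e v = j})"
              by (simp only: min_min_add)
            then show ?thesis unfolding True cardsplit[of a] by simp
          next
            case False
            have "{v \<in> verts e. c v = a \<and> lab (Relabel i j e) v = h} = {v \<in> verts e. c v = a \<and> lab e v = h}"
              using hi False by auto
            moreover have "Ce h a = C h a" using P a h hi False unfolding P_def by blast
            moreover have "min NN (card {v \<in> verts e. c v = a \<and> lab e v = h}) = Ce h a"
              using col h a unfolding cn_coloring_def by blast
            ultimately show ?thesis by simp
          qed
        qed
      qed
      have "\<forall>v\<in>verts e. N (lab (Relabel i j e) v) = N' (lab e v)"
        unfolding N'_def by (auto intro!: ext)
      then have c3: "\<forall>v\<in>verts e. check v (c v)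
        (\<lambda>b. min NN (N (lab (Relabel i j e) v) b + card {u \<in> verts (Relabel i j e). adj (Relabel i j e) v u \<and> c u = b}))"
        using col adjr unfolding cn_coloring_def by auto
      show "cn_coloring k Colors L check NN (Relabel i j e) C N c"
        unfolding cn_coloring_def using c1 c2 c3 by simp
    qed
    have lhs: "lam Err k Colors L w check NN (Relabel i j e) C N = wmin Err (\<Union>Ce\<in>P. S Ce)"
    proof -
      have "{\<Prod>v\<in>verts (Relabel i j e). w v (c v) | c. cn_coloring k Colors L check NN (Relabel i j e) C N c}
           = (\<Union>Ce\<in>P. S Ce)"
        unfolding S_def using key by auto
      then show ?thesis unfolding lam_def by simp
    qed
    have rhs: "{lam Err k Colors L w check NN e Ce N' | Ce. Ce \<in> P} = {wmin Err (S Ce) | Ce. Ce \<in> P}"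
      unfolding lam_def S_def by simp
    have top: "\<forall>x. x \<le> Err" using weights unfolding weight_structure_def by simp
    have "{lam Err k Colors L w check NN e Ce (\<lambda>h a. if h = i then N j a else N h a) | Ce.
                   Ce \<in> mats k Colors NN \<and>
                   (\<forall>a\<in>Colors. C j a = min NN (Ce i a + Ce j a)) \<and>
                   (\<forall>h\<in>{1..k} - {i, j}. \<forall>a\<in>Colors. Ce h a = C h a)}
         = {lam Err k Colors L w check NN e Ce N' | Ce. Ce \<in> P}"
      unfolding P_def N'_def by simp
    then show ?thesis using True lhs rhs wmin_union[OF top fT ST] by simp
  qed
qed

end
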